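(* Consider a shared-cache coded caching system with $N$ files $X^1,\dots,X^N$, $K$ users and $\Lambda\le K$ caches, with $N\ge K$, and let $t=\Lambda\gamma\in\{1,\dots,\Lambda\}$ be an integer. The users are partitioned into sets $\mathcal{U}_1,\dots,\mathcal{U}_\Lambda$, where $\mathcal{U}_\lambda$ is the set of users associated with cache $\lambda$, and the caches are labelled so that $\mathcal{L}_1\ge\mathcal{L}_2\ge\dots\ge\mathcal{L}_\Lambda$, where $\mathcal{L}_\lambda=|\mathcal{U}_\lambda|$. Let the placement be the SC placement $\mathcal{M}_{\text{SC}}$ described in the context, and let $\mathbf{d}_{\text{worst}}=(d_1,\dots,d_K)$ be a demand vector in which the users request pairwise distinct files. Then the generalized independence number and the min-rank over $\mathbb{F}_q$ of the induced index coding problem $\mathcal{I}(\mathcal{M}_{\text{SC}},\mathbf{d}_{\text{worst}})$ satisfy $$\alpha(\mathcal{M}_{\text{SC}},\mathbf{d}_{\text{worst}})=\kappa(\mathcal{M}_{\text{SC}},\mathbf{d}_{\text{worst}})=\sum_{i=1}^{\Lambda-\Lambda\gamma}\mathcal{L}_i\binom{\Lambda-i}{\Lambda\gamma}.$$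
   Context: Binomial convention: $\binom{n}{k}=\frac{n!}{(n-k)!k!}$ and $\binom{n}{k}=0$ if $n<k$. Here $\gamma=M/N$, where $M$ is the normalized cache memory, and $t=\Lambda\gamma$ is assumed to be an integer. SC placement $\mathcal{M}_{\text{SC}}$: each file $X^n$ is split into $\binom{\Lambda}{t}$ disjoint subfiles $X^n_{\mathcal{T}}$, one for each $\mathcal{T}\subseteq[\Lambda]$ with $|\mathcal{T}|=t$, and each subfile is regarded as a single symbol of the finite field $\mathbb{F}_q$. Cache $\lambda$ stores all subfiles $X^n_{\mathcal{T}}$ with $\lambda\in\mathcal{T}$, $n\in[N]$. Every user associated with cache $\lambda$ has access to exactly that cache's content. Index coding problem $\mathcal{I}(\mathcal{M}_{\text{SC}},\mathbf{d})$: its messages are the $N\binom{\Lambda}{t}$ subfiles $X^n_{\mathcal{T}}$. For each user $u$, associated with cache $\lambda$ and demanding file $d_u$, and for each $\mathcal{T}$ with $\lambda\notin\mathcal{T}$, there is one receiver that demands $X^{d_u}_{\mathcal{T}}$ and whose side-information set is the set of messages stored in cache $\lambda$. For an index coding problem with messages indexed by $[n]$ and receivers $i\in[K']$, where receiver $i$ demands message $f(i)$ and has side-information index set $\mathcal{X}_i$ with $f(i)\notin\mathcal{X}_i$, define the following. - Min-rank over $\mathbb{F}_q$: $\kappa=\min\{\mathrm{rank}_q(\{\mathbf{v}_i+\mathbf{e}_{f(i)}\}_{i\in[K']}) : \mathbf{v}_i\in\mathbb{F}_q^n,\ \mathrm{supp}(\mathbf{v}_i)\subseteq\mathcal{X}_i\}$,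 where $\mathbf{e}_j$ is the $j$-th standard unit vector. This equals the minimum length of a scalar linear index code over $\mathbb{F}_q$. - Generalized independence number: let $\mathcal{Y}_i=[n]\setminus(\{f(i)\}\cup\mathcal{X}_i)$ and $\mathcal{J}=\bigcup_{i}\{\{f(i)\}\cup Y_i : Y_i\subseteq\mathcal{Y}_i\}$. A set $H\subseteq[n]$ is a generalized independent set if every nonempty subset of $H$ belongs to $\mathcal{J}$. Then $\alpha$ is the maximum size of a generalized independent set. $\alpha(\mathcal{M}_{\text{SC}},\mathbf{d})$ and $\kappa(\mathcal{M}_{\text{SC}},\mathbf{d})$ denote these quantities for $\mathcal{I}(\mathcal{M}_{\text{SC}},\mathbf{d})$. *)

theory Defs
  imports Complex_Main "HOL-Library.Function_Algebras"
begin

text \<open>Generic index coding problem: message index set M, receiver set R,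
  demanded message f i, side-information set X i.  Vectors over the field 'a
  are functions from message indices to 'a (zero outside M by the support
  constraint); rank is the dimension of the span w.r.t. pointwise scaling.\<close>

definition unit_vec :: "'m \<Rightarrow> 'm \<Rightarrow> 'a::field" where
  "unit_vec j = (\<lambda>m. if m = j then 1 else 0)"

definition vec_rank :: "('m \<Rightarrow> 'a::field) set \<Rightarrow> nat" where
  "vec_rank S = vector_space.dim (\<lambda>(c::'a) (w::'m \<Rightarrow> 'a) x. c * w x) S"

definition min_rank :: "'a::field itself \<Rightarrow> 'm set \<Rightarrow> 'r set \<Rightarrow> ('r \<Rightarrow> 'm) \<Rightarrow> ('r \<Rightarrow> 'm set) \<Rightarrow> nat" where
  "min_rank _ M R f X =
     Min { vec_rank ((\<lambda>i. v i + (unit_vec (f i) :: 'm \<Rightarrow> 'a)) ` R)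
         | v :: 'r \<Rightarrow> 'm \<Rightarrow> 'a. \<forall>i\<in>R. {m. v i m \<noteq> 0} \<subseteq> X i }"

definition gen_indep_family :: "'m set \<Rightarrow> 'r set \<Rightarrow> ('r \<Rightarrow> 'm) \<Rightarrow> ('r \<Rightarrow> 'm set) \<Rightarrow> 'm set set" where
  "gen_indep_family M R f X =
     (\<Union>i\<in>R. {insert (f i) Y | Y. Y \<subseteq> M - (insert (f i) (X i))})"

definition gen_indep_set :: "'m set \<Rightarrow> 'r set \<Rightarrow> ('r \<Rightarrow> 'm) \<Rightarrow> ('r \<Rightarrow> 'm set) \<Rightarrow> 'm set \<Rightarrow> bool" where
  "gen_indep_set M R f X H \<longleftrightarrow> H \<subseteq> M \<and>
     (\<forall>B. B \<subseteq> H \<and> B \<noteq> {} \<longrightarrow> B \<in> gen_indep_family M R f X)"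

definition gen_indep_num :: "'m set \<Rightarrow> 'r set \<Rightarrow> ('r \<Rightarrow> 'm) \<Rightarrow> ('r \<Rightarrow> 'm set) \<Rightarrow> nat" where
  "gen_indep_num M R f X = Max {card H | H. gen_indep_set M R f X H}"

text \<open>SC placement (files 1..N, caches 1..Lam, users 1..K, c u = cache of user u).
  Message (n, T) is subfile X^n_T.  Receiver (u, T) with c u \<notin> T demands X^{d u}_T.\<close>

definition sc_messages :: "nat \<Rightarrow> nat \<Rightarrow> nat \<Rightarrow> (nat \<times> nat set) set" where
  "sc_messages N Lam t = {(n, T). n \<in> {1..N} \<and> T \<subseteq> {1..Lam} \<and> card T = t}"

definition sc_receivers :: "nat \<Rightarrow> nat \<Rightarrow> nat \<Rightarrow> (nat \<Rightarrow> nat) \<Rightarrow> (nat \<times> nat set) set" where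
  "sc_receivers K Lam t c = {(u, T). u \<in> {1..K} \<and> T \<subseteq> {1..Lam} \<and> card T = t \<and> c u \<notin> T}"

definition sc_demand :: "(nat \<Rightarrow> nat) \<Rightarrow> nat \<times> nat set \<Rightarrow> nat \<times> nat set" where
  "sc_demand d r = (d (fst r), snd r)"

definition sc_side :: "nat \<Rightarrow> nat \<Rightarrow> nat \<Rightarrow> (nat \<Rightarrow> nat) \<Rightarrow> nat \<times> nat set \<Rightarrow> (nat \<times> nat set) set" where
  "sc_side N Lam t c r = {m \<in> sc_messages N Lam t. c (fst r) \<in> snd m}"

definition users_of :: "nat \<Rightarrow> (nat \<Rightarrow> nat) \<Rightarrow> nat \<Rightarrow> nat set" where
  "users_of K c lam = {u \<in> {1..K}. c u = lam}"

end

theory Submission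
  imports Defs begin

interpretation fv: vector_space "\<lambda>(c::'a::field) (w::'m \<Rightarrow> 'a) x. c * w x"
  by unfold_locales (auto simp: fun_eq_iff algebra_simps)

lemma vec_rank_fv: "vec_rank S = fv.dim S"
  unfolding vec_rank_def by simp

lemma sum_fun_apply: "(\<Sum>i\<in>A. g i) x = (\<Sum>i\<in>A. (g i x :: 'b::comm_monoid_add))"
  by (induction A rule: infinite_finite_induct) auto

lemma supp_sum: "{m. (\<Sum>i\<in>A. g i) m \<noteq> (0::'b::comm_monoid_add)} \<subseteq> (\<Union>i\<in>A. {m. g i m \<noteq> 0})"
proof
  fix m assume "m \<in> {m. (\<Sum>i\<in>A. g i) m \<noteq> 0}"
  then have "(\<Sum>i\<in>A. g i m) \<noteq> 0" by (simp add: sum_fun_apply)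
  then obtain i where "i \<in> A" "g i m \<noteq> 0" by (meson sum.neutral)
  then show "m \<in> (\<Union>i\<in>A. {m. g i m \<noteq> 0})" by auto
qed

lemma indep_step:
  fixes v :: "'r \<Rightarrow> 'm \<Rightarrow> 'a::field"
  assumes fX: "\<forall>i\<in>R. f i \<notin> X i"
    and supp: "\<forall>i\<in>R. {m. v i m \<noteq> 0} \<subseteq> X i"
    and gi: "gen_indep_set M R f X H"
  shows "\<forall>H'. H' \<subseteq> H \<and> finite H' \<and> card H' = n \<longrightarrow>
     (\<exists>S. S \<subseteq> (\<lambda>i. v i + unit_vec (f i)) ` R \<and> finite S \<and> card S = n \<and> fv.independent S \<and>
        (\<forall>w\<in>fv.span S. (\<forall>h\<in>H'. w h = 0) \<longrightarrow> w = 0))"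
proof (induction n)
  case 0
  show ?case
  proof (intro allI impI)
    fix H' :: "'m set" assume "H' \<subseteq> H \<and> finite H' \<and> card H' = 0"
    then show "\<exists>S. S \<subseteq> (\<lambda>i. v i + unit_vec (f i)) ` R \<and> finite S \<and> card S = 0 \<and> fv.independent S \<and>
        (\<forall>w\<in>fv.span S. (\<forall>h\<in>H'. w h = 0) \<longrightarrow> w = 0)"
      by (intro exI[of _ "{}"]) (simp add: fv.independent_empty)
  qed
next
  case (Suc n)
  show ?case
  proof (intro allI impI)
    fix H' :: "'m set" assume H': "H' \<subseteq> H \<and> finite H' \<and> card H' = Suc n"
    then have "H' \<noteq> {}" by auto
    with H' gi have "H' \<in> gen_indep_family M R f X" unfolding gen_indep_set_def by blast
    then obtain i Y where iR: "i \<in> R" and HY: "H' = insert (f i) Y"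
      and Y: "Y \<subseteq> M - insert (f i) (X i)"
      unfolding gen_indep_family_def by blast
    have fiY: "f i \<notin> Y" using Y by auto
    have cY: "Y \<subseteq> H \<and> finite Y \<and> card Y = n" using H' HY fiY by auto
    from Suc.IH[rule_format, OF cY] obtain S where S: "S \<subseteq> (\<lambda>i. v i + unit_vec (f i)) ` R" "finite S" "card S = n"
      "fv.independent S" and Sz: "\<forall>w\<in>fv.span S. (\<forall>h\<in>Y. w h = 0) \<longrightarrow> w = 0" by (elim exE conjE) (rule that; assumption)
    define a where "a = v i + unit_vec (f i)"
    have a1: "a (f i) = 1" using fX supp iR unfolding a_def unit_vec_def by auto
    have a0: "\<forall>h\<in>Y. a h = 0"
    proof
      fix h assume "h \<in> Y"
      then have "h \<noteq> f i" "h \<notin> X i" using Y by auto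
      then show "a h = 0" using supp iR unfolding a_def unit_vec_def by auto
    qed
    have anot: "a \<notin> fv.span S"
    proof
      assume "a \<in> fv.span S"
      then have "a = 0" using Sz a0 by blast
      then show False using a1 by simp
    qed
    then have aS: "a \<notin> S" using fv.span_base[of a S] by blast
    show "\<exists>S. S \<subseteq> (\<lambda>i. v i + unit_vec (f i)) ` R \<and> finite S \<and> card S = Suc n \<and> fv.independent S \<and>
        (\<forall>w\<in>fv.span S. (\<forall>h\<in>H'. w h = 0) \<longrightarrow> w = 0)"
    proof (intro exI[of _ "insert a S"] conjI ballI impI)
      show "insert a S \<subseteq> (\<lambda>i. v i + unit_vec (f i)) ` R" using S(1) iR a_def by auto
      show "finite (insert a S)" using S(2) by simp
      show "card (insert a S) = Suc n" using S(3) aS S(2) by simp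
      show "fv.independent (insert a S)" using fv.independent_insertI[OF anot S(4)] .
    next
      fix w assume w: "w \<in> fv.span (insert a S)" and wz: "\<forall>h\<in>H'. w h = 0"
      then obtain k where k: "w - (\<lambda>x. k * a x) \<in> fv.span S"
        using fv.span_breakdown_eq[of w a S] by auto
      have "\<forall>h\<in>Y. (w - (\<lambda>x. k * a x)) h = 0" using wz a0 HY by auto
      then have e: "w - (\<lambda>x. k * a x) = 0" using k Sz by blast
      then have "w (f i) - k * a (f i) = 0" by (metis fun_diff_def zero_fun_def)
      with wz HY a1 have "k = 0" by simp
      with e show "w = 0" by (simp add: fun_eq_iff)
    qed
  qed
qed

lemma indep_le_dim:
  fixes S V :: "('m \<Rightarrow> 'a::field) set"
  assumes "finite V" "S \<subseteq> V" "fv.independent S"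
  shows "card S \<le> fv.dim V"
proof -
  obtain B where B: "B \<subseteq> V" "fv.independent B" "V \<subseteq> fv.span B" "card B = fv.dim V"
    by (rule fv.basis_exists)
  have "finite B" using B(1) assms(1) finite_subset by blast
  moreover have "S \<subseteq> fv.span B" using assms(2) B(3) by blast
  ultimately have "card S \<le> card B" using fv.independent_span_bound assms(3) by blast
  then show ?thesis using B(4) by simp
qed

lemma rank_le_card:
  fixes S :: "('m \<Rightarrow> 'a::field) set"
  assumes "finite S" shows "vec_rank S \<le> card S"
  unfolding vec_rank_fv using fv.dim_le_card[OF fv.span_superset assms] .

lemma min_rank_finite:
  fixes q :: "'a::field itself" and f :: "'r \<Rightarrow> 'm"
  assumes "finite R"
  shows "finite { vec_rank ((\<lambda>i. v i + (unit_vec (f i) :: 'm \<Rightarrow> 'a)) ` R)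
         | v :: 'r \<Rightarrow> 'm \<Rightarrow> 'a. \<forall>i\<in>R. {m. v i m \<noteq> 0} \<subseteq> X i }" (is "finite ?V")
proof (rule finite_subset)
  show "?V \<subseteq> {..card R}"
  proof
    fix x assume "x \<in> ?V"
    then obtain v :: "'r \<Rightarrow> 'm \<Rightarrow> 'a" where x: "x = vec_rank ((\<lambda>i. v i + (unit_vec (f i) :: 'm \<Rightarrow> 'a)) ` R)" by blast
    have "x \<le> card ((\<lambda>i. v i + (unit_vec (f i) :: 'm \<Rightarrow> 'a)) ` R)"
      unfolding x using rank_le_card assms by blast
    also have "\<dots> \<le> card R" using card_image_le assms by blast
    finally show "x \<in> {..card R}" by simp
  qed
qed simp

lemma min_rank_le:
  fixes q :: "'a::field itself" and f :: "'r \<Rightarrow> 'm" and v :: "'r \<Rightarrow> 'm \<Rightarrow> 'a"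
  assumes "finite R" "\<forall>i\<in>R. {m. v i m \<noteq> 0} \<subseteq> X i"
  shows "min_rank q M R f X \<le> vec_rank ((\<lambda>i. v i + (unit_vec (f i) :: 'm \<Rightarrow> 'a)) ` R)"
  unfolding min_rank_def
  by (rule Min_le[OF min_rank_finite[OF assms(1)]]) (use assms(2) in blast)

lemma min_rank_attained:
  fixes q :: "'a::field itself" and f :: "'r \<Rightarrow> 'm"
  assumes "finite R"
  shows "\<exists>v :: 'r \<Rightarrow> 'm \<Rightarrow> 'a. (\<forall>i\<in>R. {m. v i m \<noteq> 0} \<subseteq> X i) \<and>
     min_rank q M R f X = vec_rank ((\<lambda>i. v i + (unit_vec (f i) :: 'm \<Rightarrow> 'a)) ` R)"
proof -
  let ?V = "{ vec_rank ((\<lambda>i. v i + (unit_vec (f i) :: 'm \<Rightarrow> 'a)) ` R)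
         | v :: 'r \<Rightarrow> 'm \<Rightarrow> 'a. \<forall>i\<in>R. {m. v i m \<noteq> 0} \<subseteq> X i }"
  have ne: "?V \<noteq> {}"
  proof -
    have "vec_rank ((\<lambda>i. (\<lambda>_ _. 0) i + (unit_vec (f i) :: 'm \<Rightarrow> 'a)) ` R) \<in> ?V" by force
    then show ?thesis by blast
  qed
  have "Min ?V \<in> ?V" using Min_in[OF min_rank_finite[OF assms] ne] .
  then show ?thesis unfolding min_rank_def by blast
qed

lemma gen_le_min:
  fixes q :: "'a::field itself" and f :: "'r \<Rightarrow> 'm"
  assumes finM: "finite M" and finR: "finite R" and fX: "\<forall>i\<in>R. f i \<notin> X i"
  shows "gen_indep_num M R f X \<le> min_rank q M R f X"
proof -
  obtain v :: "'r \<Rightarrow> 'm \<Rightarrow> 'a" where adm: "\<forall>i\<in>R. {m. v i m \<noteq> 0} \<subseteq> X i"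
    and mr: "min_rank q M R f X = vec_rank ((\<lambda>i. v i + (unit_vec (f i) :: 'm \<Rightarrow> 'a)) ` R)"
    using min_rank_attained[OF finR, where q=q and f=f and X=X and M=M] by blast
  let ?C = "{card H | H. gen_indep_set M R f X H}"
  have finC: "finite ?C"
  proof (rule finite_subset)
    show "?C \<subseteq> card ` Pow M" unfolding gen_indep_set_def by blast
  qed (use finM in simp)
  have "gen_indep_set M R f X {}" unfolding gen_indep_set_def by blast
  then have "card {} \<in> ?C" by (intro CollectI exI[of _ "{}"]) simp
  then have neC: "?C \<noteq> {}" by blast
  have "\<forall>x\<in>?C. x \<le> min_rank q M R f X"
  proof
    fix x assume "x \<in> ?C"
    then obtain H where x: "x = card H" and gi: "gen_indep_set M R f X H" by blast
    have finH: "finite H" using gi finM unfolding gen_indep_set_def using finite_subset by blast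
    from indep_step[OF fX adm gi, rule_format, of H "card H"] finH
    obtain S where S: "S \<subseteq> (\<lambda>i. v i + unit_vec (f i)) ` R" "card S = card H" "fv.independent S"
      by blast
    have "card S \<le> fv.dim ((\<lambda>i. v i + unit_vec (f i)) ` R)"
      using indep_le_dim[OF _ S(1) S(3)] finR by blast
    then show "x \<le> min_rank q M R f X" unfolding mr vec_rank_fv x S(2)[symmetric] .
  qed
  then show ?thesis unfolding gen_indep_num_def using Max_le_iff[OF finC neC] by blast
qed

definition H0 :: "nat \<Rightarrow> nat \<Rightarrow> nat \<Rightarrow> (nat \<Rightarrow> nat) \<Rightarrow> (nat \<times> nat set) set" where
  "H0 K Lam t c = {(u, T). u \<in> {1..K} \<and> T \<subseteq> {c u<..Lam} \<and> card T = t}"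

lemma finite_users: "finite (users_of K c l)"
  unfolding users_of_def by simp

lemma finite_H0: "finite (H0 K Lam t c)"
proof (rule finite_subset)
  show "H0 K Lam t c \<subseteq> {1..K} \<times> Pow {0..Lam}" unfolding H0_def by auto
qed simp

lemma finite_msgs: "finite (sc_messages N Lam t)"
proof (rule finite_subset)
  show "sc_messages N Lam t \<subseteq> {1..N} \<times> Pow {1..Lam}" unfolding sc_messages_def by auto
qed simp

lemma finite_recv: "finite (sc_receivers K Lam t c)"
proof (rule finite_subset)
  show "sc_receivers K Lam t c \<subseteq> {1..K} \<times> Pow {1..Lam}" unfolding sc_receivers_def by auto
qed simp

lemma card_H0:
  assumes cr: "\<forall>u\<in>{1..K}. c u \<in> {1..Lam}" and tpos: "1 \<le> t"
  shows "card (H0 K Lam t c) = (\<Sum>i = 1..Lam - t. card (users_of K c i) * ((Lam - i) choose t))"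
proof -
  have eq: "H0 K Lam t c = (\<Union>l\<in>{1..Lam}. users_of K c l \<times> {T. T \<subseteq> {l<..Lam} \<and> card T = t})"
    unfolding H0_def users_of_def using cr by auto
  have "card (H0 K Lam t c) = (\<Sum>l\<in>{1..Lam}. card (users_of K c l \<times> {T. T \<subseteq> {l<..Lam} \<and> card T = t}))"
    unfolding eq
    by (rule card_UN_disjoint) (auto simp: finite_users users_of_def)
  also have "\<dots> = (\<Sum>l\<in>{1..Lam}. card (users_of K c l) * ((Lam - l) choose t))"
    by (rule sum.cong) (simp_all add: card_cartesian_product n_subsets)
  also have "\<dots> = (\<Sum>i = 1..Lam - t. card (users_of K c i) * ((Lam - i) choose t))"
  proof -
    have z: "\<forall>i\<in>{1..Lam} - {1..Lam - t}. card (users_of K c i) * ((Lam - i) choose t) = 0"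
    proof
      fix i assume "i \<in> {1..Lam} - {1..Lam - t}"
      then have "Lam - i < t" using tpos by auto
      then show "card (users_of K c i) * ((Lam - i) choose t) = 0" by simp
    qed
    show ?thesis by (rule sum.mono_neutral_right[OF _ _ z]) auto
  qed
  finally show ?thesis .
qed

lemma fX_sc: "\<forall>i\<in>sc_receivers K Lam t c. sc_demand d i \<notin> sc_side N Lam t c i"
  unfolding sc_receivers_def sc_demand_def sc_side_def by auto

lemma H1_gen:
  assumes dr: "\<forall>u\<in>{1..K}. d u \<in> {1..N}"
  shows "gen_indep_set (sc_messages N Lam t) (sc_receivers K Lam t c) (sc_demand d) (sc_side N Lam t c)
           ((\<lambda>(u, T). (d u, T)) ` H0 K Lam t c)"
  unfolding gen_indep_set_def
proof (intro conjI allI impI)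
  show sub: "(\<lambda>(u, T). (d u, T)) ` H0 K Lam t c \<subseteq> sc_messages N Lam t"
  proof
    fix m assume "m \<in> (\<lambda>(u, T). (d u, T)) ` H0 K Lam t c"
    then obtain u T where m: "m = (d u, T)" and uT: "(u, T) \<in> H0 K Lam t c" by auto
    then have "u \<in> {1..K}" "T \<subseteq> {c u<..Lam}" "card T = t" unfolding H0_def by auto
    then show "m \<in> sc_messages N Lam t" unfolding m sc_messages_def using dr by auto
  qed
  fix B assume B: "B \<subseteq> (\<lambda>(u, T). (d u, T)) ` H0 K Lam t c \<and> B \<noteq> {}"
  define B0 where "B0 = {p \<in> H0 K Lam t c. (\<lambda>(u, T). (d u, T)) p \<in> B}"
  have finB0: "finite B0" unfolding B0_def using finite_H0 by simp
  have neB0: "B0 \<noteq> {}" using B unfolding B0_def by blast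
  define mn where "mn = Min ((\<lambda>p. c (fst p)) ` B0)"
  have "mn \<in> (\<lambda>p. c (fst p)) ` B0" unfolding mn_def using finB0 neB0 by simp
  then obtain u T where uT0: "(u, T) \<in> B0" and mnu: "mn = c u" by auto
  have mnle: "\<forall>p\<in>B0. c u \<le> c (fst p)"
  proof
    fix p assume "p \<in> B0"
    show "c u \<le> c (fst p)" unfolding mnu[symmetric] mn_def by (rule Min_le) (use finB0 \<open>p \<in> B0\<close> in auto)
  qed
  have uT: "u \<in> {1..K}" "T \<subseteq> {c u<..Lam}" "card T = t" and dB: "(d u, T) \<in> B"
    using uT0 unfolding B0_def H0_def by auto
  have iR: "(u, T) \<in> sc_receivers K Lam t c"
    using uT unfolding sc_receivers_def by auto
  have fi: "sc_demand d (u, T) = (d u, T)" unfolding sc_demand_def by simp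
  have Y: "B - {(d u, T)} \<subseteq> sc_messages N Lam t - insert (sc_demand d (u, T)) (sc_side N Lam t c (u, T))"
  proof
    fix y assume y: "y \<in> B - {(d u, T)}"
    have "y \<in> (\<lambda>(u, T). (d u, T)) ` H0 K Lam t c" using y B by blast
    then obtain u' T' where yy: "y = (d u', T')" and p: "(u', T') \<in> H0 K Lam t c" by auto
    have "(u', T') \<in> B0" unfolding B0_def using p y yy by simp
    then have "c u \<le> c u'" using mnle by fastforce
    moreover have "T' \<subseteq> {c u'<..Lam}" using p unfolding H0_def by auto
    ultimately have "c u \<notin> T'" by auto
    moreover have "y \<in> sc_messages N Lam t" using y B sub by blast
    moreover have "y \<noteq> (d u, T)" using y by simp
    ultimately show "y \<in> sc_messages N Lam t - insert (sc_demand d (u, T)) (sc_side N Lam t c (u, T))"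
      unfolding fi sc_side_def yy by simp
  qed
  have "B = insert (sc_demand d (u, T)) (B - {(d u, T)})" using dB fi by auto
  show "B \<in> gen_indep_family (sc_messages N Lam t) (sc_receivers K Lam t c) (sc_demand d) (sc_side N Lam t c)"
    unfolding gen_indep_family_def
  proof (rule UN_I[OF iR])
    show "B \<in> {insert (sc_demand d (u, T)) Y |Y.
        Y \<subseteq> sc_messages N Lam t - insert (sc_demand d (u, T)) (sc_side N Lam t c (u, T))}"
      by (rule CollectI, rule exI[of _ "B - {(d u, T)}"]) (use Y \<open>B = _\<close> in simp)
  qed
qed

lemma H1_card:
  assumes dinj: "inj_on d {1..K}"
  shows "card ((\<lambda>(u, T). (d u, T)) ` H0 K Lam t c) = card (H0 K Lam t c)"
proof (rule card_image)
  show "inj_on (\<lambda>(u, T). (d u, T)) (H0 K Lam t c)"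
  proof (rule inj_onI)
    fix x y assume x: "x \<in> H0 K Lam t c" and y: "y \<in> H0 K Lam t c"
      and e: "(\<lambda>(u, T). (d u, T)) x = (\<lambda>(u, T). (d u, T)) y"
    obtain u T where xx: "x = (u, T)" by (cases x)
    obtain u' T' where yy: "y = (u', T')" by (cases y)
    have "u \<in> {1..K}" "u' \<in> {1..K}" using x y xx yy unfolding H0_def by auto
    moreover have "d u = d u'" "T = T'" using e xx yy by auto
    ultimately show "x = y" using inj_onD[OF dinj] xx yy by auto
  qed
qed

lemma alpha_ge:
  assumes dr: "\<forall>u\<in>{1..K}. d u \<in> {1..N}" and dinj: "inj_on d {1..K}"
  shows "card (H0 K Lam t c) \<le> gen_indep_num (sc_messages N Lam t) (sc_receivers K Lam t c) (sc_demand d) (sc_side N Lam t c)"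
proof -
  let ?C = "{card H | H. gen_indep_set (sc_messages N Lam t) (sc_receivers K Lam t c) (sc_demand d) (sc_side N Lam t c) H}"
  have finC: "finite ?C"
  proof (rule finite_subset)
    show "?C \<subseteq> card ` Pow (sc_messages N Lam t)" unfolding gen_indep_set_def by blast
  qed (use finite_msgs in simp)
  have "card ((\<lambda>(u, T). (d u, T)) ` H0 K Lam t c) \<in> ?C"
    by (rule CollectI, rule exI[of _ "(\<lambda>(u, T). (d u, T)) ` H0 K Lam t c"]) (simp add: H1_gen[OF dr])
  then have "card (H0 K Lam t c) \<in> ?C" using H1_card[OF dinj] by simp
  then show ?thesis unfolding gen_indep_num_def by (rule Max_ge[OF finC])
qed

definition enum :: "nat \<Rightarrow> (nat \<Rightarrow> nat) \<Rightarrow> nat \<Rightarrow> nat \<Rightarrow> nat" where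
  "enum K c l = (SOME h. bij_betw h {0..<card (users_of K c l)} (users_of K c l))"

definition rk :: "nat \<Rightarrow> (nat \<Rightarrow> nat) \<Rightarrow> nat \<Rightarrow> nat" where
  "rk K c u = inv_into {0..<card (users_of K c (c u))} (enum K c (c u)) u"

lemma enum_bij: "bij_betw (enum K c l) {0..<card (users_of K c l)} (users_of K c l)"
  unfolding enum_def by (rule someI_ex[OF ex_bij_betw_nat_finite[OF finite_users]])

lemma rk_props:
  assumes "u \<in> {1..K}"
  shows "rk K c u < card (users_of K c (c u)) \<and> enum K c (c u) (rk K c u) = u"
proof -
  have "u \<in> users_of K c (c u)" using assms unfolding users_of_def by simp
  then have u: "u \<in> enum K c (c u) ` {0..<card (users_of K c (c u))}"
    using bij_betw_imp_surj_on[OF enum_bij] by simp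
  show ?thesis unfolding rk_def using inv_into_into[OF u] f_inv_into_f[OF u] by simp
qed

lemma enum_props:
  assumes "j < card (users_of K c l)"
  shows "enum K c l j \<in> users_of K c l \<and> rk K c (enum K c l j) = j"
proof -
  have j: "j \<in> {0..<card (users_of K c l)}" using assms by simp
  have mem: "enum K c l j \<in> users_of K c l" using bij_betwE[OF enum_bij] j by blast
  then have cl: "c (enum K c l j) = l" unfolding users_of_def by simp
  have "rk K c (enum K c l j) = inv_into {0..<card (users_of K c l)} (enum K c l) (enum K c l j)"
    unfolding rk_def cl ..
  also have "\<dots> = j" using inv_into_f_f[OF bij_betw_imp_inj_on[OF enum_bij] j] .
  finally show ?thesis using mem by simp
qed

lemma supp_unit: "{m. (unit_vec p :: 'm \<Rightarrow> 'a::field) m \<noteq> 0} = {p}"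
  unfolding unit_vec_def by auto

lemma kappa_le:
  fixes q :: "'a::field itself"
  assumes cr: "\<forall>u\<in>{1..K}. c u \<in> {1..Lam}"
    and mono: "\<forall>i j. 1 \<le> i \<and> i \<le> j \<and> j \<le> Lam \<longrightarrow> card (users_of K c j) \<le> card (users_of K c i)"
    and dr: "\<forall>u\<in>{1..K}. d u \<in> {1..N}"
  shows "min_rank q (sc_messages N Lam t) (sc_receivers K Lam t c) (sc_demand d) (sc_side N Lam t c)
     \<le> card (H0 K Lam t c)"
proof -
  define L where "L l = card (users_of K c l)" for l
  define xv :: "nat \<Rightarrow> nat set \<Rightarrow> nat \<times> nat set \<Rightarrow> 'a" where
    "xv j Q = (\<Sum>l\<in>{l\<in>Q. j < L l}. unit_vec (d (enum K c l j), Q - {l}))" for j Q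
  define v :: "nat \<times> nat set \<Rightarrow> nat \<times> nat set \<Rightarrow> 'a" where
    "v r = (\<Sum>l\<in>{l\<in>snd r. rk K c (fst r) < L l}.
       unit_vec (d (enum K c l (rk K c (fst r))), insert (c (fst r)) (snd r) - {l}))" for r
  define g where "g r = (rk K c (fst r), insert (c (fst r)) (snd r))" for r :: "nat \<times> nat set"
  let ?R = "sc_receivers K Lam t c"
  have recv: "u \<in> {1..K} \<and> T \<subseteq> {1..Lam} \<and> card T = t \<and> c u \<notin> T \<and> finite T"
    if "(u, T) \<in> ?R" for u T
    using that unfolding sc_receivers_def by (auto intro: finite_subset)
  have row: "v r + unit_vec (sc_demand d r) = xv (fst (g r)) (snd (g r))" if r: "r \<in> ?R" for r
  proof -
    obtain u T where rr: "r = (u, T)" by (cases r)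
    have R: "u \<in> {1..K}" "T \<subseteq> {1..Lam}" "card T = t" "c u \<notin> T" "finite T"
      using recv r rr by auto
    define j where "j = rk K c u"
    have jl: "j < L (c u)" and eu: "enum K c (c u) j = u"
      using rk_props[OF R(1), of c] unfolding j_def L_def by auto
    have A: "{l\<in>insert (c u) T. j < L l} = insert (c u) {l\<in>T. j < L l}" using jl by auto
    have fin: "finite {l\<in>T. j < L l}" using R(5) by simp
    have nin: "c u \<notin> {l\<in>T. j < L l}" using R(4) by simp
    have "xv j (insert (c u) T) = unit_vec (d u, T)
       + (\<Sum>l\<in>{l\<in>T. j < L l}. unit_vec (d (enum K c l j), insert (c u) T - {l}))"
      unfolding xv_def A sum.insert[OF fin nin] eu using R(4) by simp
    then show ?thesis unfolding rr g_def v_def sc_demand_def j_def by (simp add: add.commute)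
  qed
  have adm: "\<forall>r\<in>?R. {m. v r m \<noteq> 0} \<subseteq> sc_side N Lam t c r"
  proof
    fix r assume r: "r \<in> ?R"
    obtain u T where rr: "r = (u, T)" by (cases r)
    have R: "u \<in> {1..K}" "T \<subseteq> {1..Lam}" "card T = t" "c u \<notin> T" "finite T"
      using recv r rr by auto
    define j where "j = rk K c u"
    have "{m. v r m \<noteq> 0} \<subseteq> (\<Union>l\<in>{l\<in>T. j < L l}.
        {m. (unit_vec (d (enum K c l j), insert (c u) T - {l}) :: _ \<Rightarrow> 'a) m \<noteq> 0})"
      unfolding v_def rr j_def by (simp only: fst_conv snd_conv) (rule supp_sum)
    also have "\<dots> = (\<Union>l\<in>{l\<in>T. j < L l}. {(d (enum K c l j), insert (c u) T - {l})})"
      by (simp only: supp_unit)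
    also have "\<dots> \<subseteq> sc_side N Lam t c r"
    proof (rule UN_least)
      fix l assume l: "l \<in> {l\<in>T. j < L l}"
      have e: "enum K c l j \<in> users_of K c l" using enum_props[of j K c l] l unfolding L_def by simp
      then have "enum K c l j \<in> {1..K}" unfolding users_of_def by simp
      then have dn: "d (enum K c l j) \<in> {1..N}" using dr by blast
      have cu: "c u \<in> {1..Lam}" using cr R(1) by blast
      have lne: "l \<noteq> c u" using l R(4) by auto
      have sub: "insert (c u) T - {l} \<subseteq> {1..Lam}" using R(2) cu by auto
      have "card (insert (c u) T) = Suc t" using R(3,4,5) by simp
      then have cd: "card (insert (c u) T - {l}) = t" using l R(5) by simp
      show "{(d (enum K c l j), insert (c u) T - {l})} \<subseteq> sc_side N Lam t c r"
        unfolding sc_side_def sc_messages_def rr using dn sub cd lne by simp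
    qed
    finally show "{m. v r m \<noteq> 0} \<subseteq> sc_side N Lam t c r" .
  qed
  have sub: "g ` ?R \<subseteq> g ` H0 K Lam t c"
  proof
    fix p assume "p \<in> g ` ?R"
    then obtain u T where r: "(u, T) \<in> ?R" and p: "p = g (u, T)" by auto
    have R: "u \<in> {1..K}" "T \<subseteq> {1..Lam}" "card T = t" "c u \<notin> T" "finite T"
      using recv r by auto
    define Q where "Q = insert (c u) T"
    define l0 where "l0 = Min Q"
    have cu: "c u \<in> {1..Lam}" using cr R(1) by blast
    have finQ: "finite Q" "Q \<noteq> {}" unfolding Q_def using R(5) by auto
    have l0Q: "l0 \<in> Q" unfolding l0_def using finQ by simp
    have l0le: "\<forall>x\<in>Q. l0 \<le> x" unfolding l0_def using finQ by simp
    have Qsub: "Q \<subseteq> {1..Lam}" unfolding Q_def using R(2) cu by auto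
    have "l0 \<le> c u" using l0le unfolding Q_def by simp
    moreover have "1 \<le> l0" using l0Q Qsub by auto
    ultimately have Lle: "L (c u) \<le> L l0" using mono cu unfolding L_def by auto
    define j where "j = rk K c u"
    have jl: "j < L l0" using rk_props[OF R(1), of c] Lle unfolding j_def L_def by auto
    define u0 where "u0 = enum K c l0 j"
    have u0: "u0 \<in> users_of K c l0" "rk K c u0 = j"
      using enum_props[of j K c l0] jl unfolding u0_def L_def by auto
    have u0K: "u0 \<in> {1..K}" and cu0: "c u0 = l0" using u0(1) unfolding users_of_def by auto
    define T0 where "T0 = Q - {l0}"
    have T0sub: "T0 \<subseteq> {c u0<..Lam}"
    proof
      fix x assume "x \<in> T0"
      then have "x \<in> Q" "x \<noteq> l0" unfolding T0_def by auto
      then show "x \<in> {c u0<..Lam}" using l0le Qsub cu0 by fastforce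
    qed
    have "card Q = Suc t" unfolding Q_def using R(3,4,5) by simp
    then have cT0: "card T0 = t" unfolding T0_def using l0Q finQ by simp
    have inH: "(u0, T0) \<in> H0 K Lam t c" unfolding H0_def using u0K T0sub cT0 by simp
    have "g (u0, T0) = (j, Q)" unfolding g_def using u0(2) cu0 l0Q unfolding T0_def by auto
    also have "\<dots> = p" unfolding p g_def j_def Q_def by simp
    finally show "p \<in> g ` H0 K Lam t c" using inH by force
  qed
  have rows: "(\<lambda>i. v i + unit_vec (sc_demand d i)) ` ?R = (\<lambda>p. xv (fst p) (snd p)) ` (g ` ?R)"
    unfolding image_image using row by (rule image_cong[OF refl])
  have "min_rank q (sc_messages N Lam t) ?R (sc_demand d) (sc_side N Lam t c)
      \<le> vec_rank ((\<lambda>i. v i + (unit_vec (sc_demand d i) :: _ \<Rightarrow> 'a)) ` ?R)"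
    by (rule min_rank_le[OF finite_recv adm])
  also have "\<dots> \<le> card ((\<lambda>i. v i + (unit_vec (sc_demand d i) :: _ \<Rightarrow> 'a)) ` ?R)"
    by (rule rank_le_card) (simp add: finite_recv)
  also have "\<dots> \<le> card (g ` ?R)" unfolding rows by (rule card_image_le) (simp add: finite_recv)
  also have "\<dots> \<le> card (g ` H0 K Lam t c)" by (rule card_mono[OF _ sub]) (simp add: finite_H0)
  also have "\<dots> \<le> card (H0 K Lam t c)" by (rule card_image_le[OF finite_H0])
  finally show ?thesis .
qed

theorem theorem1:
  fixes N K Lam t :: nat and c d :: "nat \<Rightarrow> nat" and q :: "'a::{field,finite} itself"
  assumes "Lam \<le> K" and "K \<le> N"
    and "1 \<le> t" and "t \<le> Lam"
    and "\<forall>u\<in>{1..K}. c u \<in> {1..Lam}"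
    and "\<forall>i j. 1 \<le> i \<and> i \<le> j \<and> j \<le> Lam \<longrightarrow> card (users_of K c j) \<le> card (users_of K c i)"
    and "\<forall>u\<in>{1..K}. d u \<in> {1..N}" and "inj_on d {1..K}"
  shows "gen_indep_num (sc_messages N Lam t) (sc_receivers K Lam t c) (sc_demand d) (sc_side N Lam t c)
           = min_rank q (sc_messages N Lam t) (sc_receivers K Lam t c) (sc_demand d) (sc_side N Lam t c)
       \<and> min_rank q (sc_messages N Lam t) (sc_receivers K Lam t c) (sc_demand d) (sc_side N Lam t c)
           = (\<Sum>i = 1..Lam - t. card (users_of K c i) * ((Lam - i) choose t))"
proof -
  have a: "gen_indep_num (sc_messages N Lam t) (sc_receivers K Lam t c) (sc_demand d) (sc_side N Lam t c)
     \<le> min_rank q (sc_messages N Lam t) (sc_receivers K Lam t c) (sc_demand d) (sc_side N Lam t c)"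
    by (rule gen_le_min[OF finite_msgs finite_recv fX_sc])
  have b: "min_rank q (sc_messages N Lam t) (sc_receivers K Lam t c) (sc_demand d) (sc_side N Lam t c)
     \<le> card (H0 K Lam t c)"
    by (rule kappa_le[OF assms(5) assms(6) assms(7)])
  have c: "card (H0 K Lam t c) \<le> gen_indep_num (sc_messages N Lam t) (sc_receivers K Lam t c) (sc_demand d) (sc_side N Lam t c)"
    by (rule alpha_ge[OF assms(7) assms(8)])
  have e: "card (H0 K Lam t c) = (\<Sum>i = 1..Lam - t. card (users_of K c i) * ((Lam - i) choose t))"
    by (rule card_H0[OF assms(5) assms(3)])
  show ?thesis using a b c e by linarith
qed

end
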